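(* Let an FCA with state set $S$, neighborhood $m=l+1+r$, local rule $f$ and boundary type $b\in\{\text{null},\text{periodic}\}$ be given, and let $G$ be its reversibility graph. If $N$ is a negative vertex of $G$ with value $k\ge1$ and some circuit of length $1$ (a loop) passes through $N$, then the FCA is not $n$-cell-reversible for every $n\ge k$.
   Context: A one-dimensional finite cellular automaton (FCA) is given by a state set $S=\{0,1,\dots,s-1\}$, integers $l,r\ge 0$ with neighborhood size $m=l+1+r\ge 2$, a local rule $f:S^m\to S$, and a boundary type $b\in\{\text{null},\text{periodic}\}$. For $n\ge 1$ the global map $\tau_n:S^n\to S^n$ sends $(x_0,\dots,x_{n-1})$ to $(y_0,\dots,y_{n-1})$ with $y_i=f(x_{i-l},\dots,x_{i+r})$, where for the null boundary $x_j=0$ whenever $j<0$ or $j>n-1$, and for the periodic boundary indices are taken modulo $n$. The FCA is $n$-cell-reversible if $\tau_n$ is a bijection (equivalently, since $S^n$ is finite, surjective). Reversibility graph (RG). Null boundary: vertices are subsets of $S^{m-1}$; the root is $N_0=\{(a_1,\dots,a_{m-1})\in S^{m-1}: a_1=\dots=a_l=0\}$; the acceptance set is $R=\{(a_1,\dots,a_{m-1})\in S^{m-1}: a_{m-r}=\dots=a_{m-1}=0\}$ (so $R=S^{m-1}$ if $r=0$); for a subset $N$ and $c\in S$, $\delta(N,c)=\{(a_1,\dots,a_{m-1})\in S^{m-1}:\exists a_0\in S,\ (a_0,\dots,a_{m-2})\in N,\ f(a_0,a_1,\dots,a_{m-1})=c\}$. Periodic boundary: vertices are subsets of $S^{m-1}\times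 S^{m-1}$; the root and the acceptance set are $N_0=R=\{(a,a):a\in S^{m-1}\}$; $\delta(N,c)=\{((a_1,\dots,a_{m-1}),(b_1,\dots,b_{m-1})):\exists b_0\in S,\ ((a_1,\dots,a_{m-1}),(b_0,\dots,b_{m-2}))\in N,\ f(b_0,\dots,b_{m-1})=c\}$. In both cases the RG is the directed graph whose vertex set consists of all subsets obtainable from $N_0$ by repeatedly applying $\delta$ (including $N_0$; equal subsets are the same vertex; the empty set may occur), with, for each vertex $N$ and each $c\in S$, an edge labelled $c$ from $N$ to $\delta(N,c)$. The value of a vertex $N$ is the length of a shortest directed path from $N_0$ to $N$. A vertex $N$ is negative if $N\cap R=\emptyset$. A circuit is an elementary directed cycle of the RG (a closed directed path with no repeated vertex other than its start = end; a loop is a circuit of length $1$); its length is its number of edges, and it passes through $N$ if $N$ is one of its vertices. *)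

theory Defs
  imports Main
begin

datatype boundary = Null | Periodic

definition states :: "nat \<Rightarrow> nat set" where
  "states s = {0..<s}"

definition words :: "nat \<Rightarrow> nat \<Rightarrow> nat list set" where
  "words s k = {xs. length xs = k \<and> set xs \<subseteq> states s}"

definition cell :: "boundary \<Rightarrow> nat list \<Rightarrow> int \<Rightarrow> nat" where
  "cell b xs j = (case b of
      Null \<Rightarrow> (if 0 \<le> j \<and> j < int (length xs) then xs ! nat j else 0)
    | Periodic \<Rightarrow> xs ! nat (j mod int (length xs)))"

definition gmap :: "boundary \<Rightarrow> nat \<Rightarrow> nat \<Rightarrow> (nat list \<Rightarrow> nat) \<Rightarrow> nat list \<Rightarrow> nat list" where
  "gmap b l r f xs =
     map (\<lambda>i. f (map (\<lambda>d. cell b xs (int i - int l + int d)) [0..<l + 1 + r]))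
         [0..<length xs]"

definition n_cell_reversible ::
  "boundary \<Rightarrow> nat \<Rightarrow> nat \<Rightarrow> nat \<Rightarrow> (nat list \<Rightarrow> nat) \<Rightarrow> nat \<Rightarrow> bool" where
  "n_cell_reversible b s l r f n = bij_betw (gmap b l r f) (words s n) (words s n)"

definition rg_value :: "'v \<Rightarrow> ('v \<Rightarrow> nat \<Rightarrow> 'v) \<Rightarrow> nat set \<Rightarrow> 'v \<Rightarrow> nat \<Rightarrow> bool" where
  "rg_value N0 \<delta> S N k \<longleftrightarrow>
     (\<exists>w. set w \<subseteq> S \<and> length w = k \<and> foldl \<delta> N0 w = N) \<and>
     (\<forall>w. set w \<subseteq> S \<and> foldl \<delta> N0 w = N \<longrightarrow> k \<le> length w)"

definition neg_loop_vertex ::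
  "'a set \<Rightarrow> 'a set \<Rightarrow> ('a set \<Rightarrow> nat \<Rightarrow> 'a set) \<Rightarrow> nat set \<Rightarrow> 'a set \<Rightarrow> nat \<Rightarrow> bool" where
  "neg_loop_vertex N0 R \<delta> S N k \<longleftrightarrow>
     rg_value N0 \<delta> S N k \<and> N \<inter> R = {} \<and> (\<exists>c\<in>S. \<delta> N c = N)"

definition rg_root_null :: "nat \<Rightarrow> nat \<Rightarrow> nat \<Rightarrow> nat list set" where
  "rg_root_null s l r = {a \<in> words s (l + r). \<forall>i<l. a ! i = 0}"

definition rg_acc_null :: "nat \<Rightarrow> nat \<Rightarrow> nat \<Rightarrow> nat list set" where
  "rg_acc_null s l r = {a \<in> words s (l + r). \<forall>i<l + r. l \<le> i \<longrightarrow> a ! i = 0}"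

definition rg_delta_null ::
  "nat \<Rightarrow> nat \<Rightarrow> nat \<Rightarrow> (nat list \<Rightarrow> nat) \<Rightarrow> nat list set \<Rightarrow> nat \<Rightarrow> nat list set" where
  "rg_delta_null s l r f N c =
     {a \<in> words s (l + r). \<exists>a0\<in>states s. (a0 # butlast a) \<in> N \<and> f (a0 # a) = c}"

definition rg_root_per :: "nat \<Rightarrow> nat \<Rightarrow> nat \<Rightarrow> (nat list \<times> nat list) set" where
  "rg_root_per s l r = {(a, a) | a. a \<in> words s (l + r)}"

definition rg_delta_per ::
  "nat \<Rightarrow> nat \<Rightarrow> nat \<Rightarrow> (nat list \<Rightarrow> nat) \<Rightarrow> (nat list \<times> nat list) set \<Rightarrow> nat
     \<Rightarrow> (nat list \<times> nat list) set" where
  "rg_delta_per s l r f N c =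
     {(a, b) | a b. a \<in> words s (l + r) \<and> b \<in> words s (l + r) \<and>
        (\<exists>b0\<in>states s. (a, b0 # butlast b) \<in> N \<and> f (b0 # b) = c)}"

end

theory Submission
  imports Defs
begin

definition W :: "boundary \<Rightarrow> nat list \<Rightarrow> int \<Rightarrow> nat \<Rightarrow> nat list" where
  "W b xs t L = map (\<lambda>d. cell b xs (t + int d)) [0..<L]"

lemma W_len[simp]: "length (W b xs t L) = L" by (simp add: W_def)
lemma W_nth[simp]: "i < L \<Longrightarrow> W b xs t L ! i = cell b xs (t + int i)" by (simp add: W_def)

lemma W_Suc: "W b xs t (Suc M) = cell b xs t # W b xs (t+1) M"
  by (rule nth_equalityI) (auto simp: nth_Cons' algebra_simps)

lemma W_butlast: "L \<ge> 1 \<Longrightarrow> cell b xs t # butlast (W b xs (t+1) L) = W b xs t L"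
  by (rule nth_equalityI) (auto simp: nth_Cons' nth_butlast algebra_simps)

lemma gmap_nth: "i < length xs \<Longrightarrow> gmap b l r f xs ! i
   = f (cell b xs (int i - int l) # W b xs (int i - int l + 1) (l + r))"
proof -
  assume "i < length xs"
  hence "gmap b l r f xs ! i = f (W b xs (int i - int l) (Suc (l + r)))"
    by (simp add: gmap_def W_def)
  thus ?thesis by (simp add: W_Suc)
qed

lemma gmap_len[simp]: "length (gmap b l r f xs) = length xs" by (simp add: gmap_def)

lemma cell_in: "s \<ge> 1 \<Longrightarrow> xs \<in> words s n \<Longrightarrow> n \<ge> 1 \<Longrightarrow> cell b xs j \<in> states s"
proof -
  assume a: "s \<ge> 1" "xs \<in> words s n" "n \<ge> 1"
  show ?thesis
  proof (cases b)
    case Null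
    then show ?thesis using a
      by (auto simp: cell_def words_def states_def subset_iff)
  next
    case Periodic
    have "nat (j mod int n) < n" using a by (simp add: nat_less_iff)
    then show ?thesis using a Periodic
      by (auto simp: cell_def words_def subset_iff)
  qed
qed

lemma W_words: "s \<ge> 1 \<Longrightarrow> xs \<in> words s n \<Longrightarrow> n \<ge> 1 \<Longrightarrow> W b xs t L \<in> words s L"
  using cell_in[of s xs n b] by (auto simp: words_def W_def)

lemma foldl_take_Suc: "t < length y \<Longrightarrow> foldl d N (take (Suc t) y) = d (foldl d N (take t y)) (y ! t)"
  by (simp add: take_Suc_conv_app_nth)

lemma null_step: "a \<in> words s (l+r) \<Longrightarrow> a0 \<in> states s \<Longrightarrow> a0 # butlast a \<in> N
   \<Longrightarrow> f (a0 # a) = c \<Longrightarrow> a \<in> rg_delta_null s l r f N c"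
  unfolding rg_delta_null_def by blast

lemma per_step: "a \<in> words s (l+r) \<Longrightarrow> b \<in> words s (l+r) \<Longrightarrow> b0 \<in> states s \<Longrightarrow> (a, b0 # butlast b) \<in> N
   \<Longrightarrow> f (b0 # b) = c \<Longrightarrow> (a, b) \<in> rg_delta_per s l r f N c"
  unfolding rg_delta_per_def by blast

lemma null_inv:
  assumes s: "s \<ge> 1" and xs: "xs \<in> words s n" and n: "n \<ge> 1" and lr: "l + r \<ge> 1"
  shows "t \<le> n \<Longrightarrow> W Null xs (int t - int l) (l + r)
     \<in> foldl (rg_delta_null s l r f) (rg_root_null s l r) (take t (gmap Null l r f xs))"
proof (induction t)
  case 0
  have "W Null xs (- int l) (l + r) \<in> words s (l+r)" using W_words[OF s xs n] by simp
  moreover have "\<forall>i<l. W Null xs (- int l) (l + r) ! i = 0"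
    by (auto simp: cell_def)
  ultimately show ?case by (simp add: rg_root_null_def)
next
  case (Suc t)
  have ln: "length xs = n" using xs by (simp add: words_def)
  have tl: "t < length (gmap Null l r f xs)" using Suc.prems ln by simp
  have IH: "W Null xs (int t - int l) (l + r)
     \<in> foldl (rg_delta_null s l r f) (rg_root_null s l r) (take t (gmap Null l r f xs))"
    using Suc by simp
  have e: "int (Suc t) - int l = int t - int l + 1" by simp
  show ?case
    unfolding foldl_take_Suc[OF tl] e
    apply (rule null_step[OF W_words[OF s xs n] cell_in[OF s xs n]])
    using IH W_butlast[OF lr, of Null xs "int t - int l"] gmap_nth[of t xs Null l r f] tl
    by auto
qed

lemma null_acc:
  assumes s: "s \<ge> 1" and xs: "xs \<in> words s n" and n: "n \<ge> 1" and lr: "l + r \<ge> 1"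
  shows "foldl (rg_delta_null s l r f) (rg_root_null s l r) (gmap Null l r f xs) \<inter> rg_acc_null s l r \<noteq> {}"
proof -
  have ln: "length xs = n" using xs by (simp add: words_def)
  have "W Null xs (int n - int l) (l + r)
     \<in> foldl (rg_delta_null s l r f) (rg_root_null s l r) (take n (gmap Null l r f xs))"
    using null_inv[OF s xs n lr] by simp
  moreover have "take n (gmap Null l r f xs) = gmap Null l r f xs" using ln by simp
  moreover have "W Null xs (int n - int l) (l + r) \<in> rg_acc_null s l r"
    using W_words[OF s xs n] ln by (auto simp: rg_acc_null_def cell_def)
  ultimately show ?thesis by auto
qed

lemma per_inv:
  assumes s: "s \<ge> 1" and xs: "xs \<in> words s n" and n: "n \<ge> 1" and lr: "l + r \<ge> 1"
  shows "t \<le> n \<Longrightarrow> (W Periodic xs (- int l) (l + r), W Periodic xs (int t - int l) (l + r))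
     \<in> foldl (rg_delta_per s l r f) (rg_root_per s l r) (take t (gmap Periodic l r f xs))"
proof (induction t)
  case 0
  have "W Periodic xs (- int l) (l + r) \<in> words s (l+r)" using W_words[OF s xs n] by simp
  then show ?case by (simp add: rg_root_per_def)
next
  case (Suc t)
  have ln: "length xs = n" using xs by (simp add: words_def)
  have tl: "t < length (gmap Periodic l r f xs)" using Suc.prems ln by simp
  have IH: "(W Periodic xs (- int l) (l + r), W Periodic xs (int t - int l) (l + r))
     \<in> foldl (rg_delta_per s l r f) (rg_root_per s l r) (take t (gmap Periodic l r f xs))"
    using Suc by simp
  have e: "int (Suc t) - int l = int t - int l + 1" by simp
  show ?case
    unfolding foldl_take_Suc[OF tl] e
    apply (rule per_step[OF W_words[OF s xs n] W_words[OF s xs n] cell_in[OF s xs n]])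
    using IH W_butlast[OF lr, of Periodic xs "int t - int l"] gmap_nth[of t xs Periodic l r f] tl
    by auto
qed

lemma per_acc:
  assumes s: "s \<ge> 1" and xs: "xs \<in> words s n" and n: "n \<ge> 1" and lr: "l + r \<ge> 1"
  shows "foldl (rg_delta_per s l r f) (rg_root_per s l r) (gmap Periodic l r f xs) \<inter> rg_root_per s l r \<noteq> {}"
proof -
  have ln: "length xs = n" using xs by (simp add: words_def)
  have "(W Periodic xs (- int l) (l + r), W Periodic xs (int n - int l) (l + r))
     \<in> foldl (rg_delta_per s l r f) (rg_root_per s l r) (take n (gmap Periodic l r f xs))"
    using per_inv[OF s xs n lr] by simp
  moreover have "take n (gmap Periodic l r f xs) = gmap Periodic l r f xs" using ln by simp
  moreover have "W Periodic xs (int n - int l) (l + r) = W Periodic xs (- int l) (l + r)"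
  proof (rule nth_equalityI)
    fix i assume "i < length (W Periodic xs (int n - int l) (l + r))"
    hence i: "i < l + r" by simp
    have "(int n - int l + int i) mod int n = (- int l + int i) mod int n"
      by (metis add.commute add_diff_eq diff_add_cancel mod_add_self2 uminus_add_conv_diff)
    thus "W Periodic xs (int n - int l) (l + r) ! i = W Periodic xs (- int l) (l + r) ! i"
      using i ln by (simp add: cell_def)
  qed simp
  moreover have "W Periodic xs (- int l) (l + r) \<in> words s (l+r)" using W_words[OF s xs n] by simp
  ultimately show ?thesis by (auto simp: rg_root_per_def)
qed

lemma foldl_rep: "d N c = N \<Longrightarrow> foldl d N (replicate j c) = N"
  by (induction j) auto

lemma generic:
  assumes nl: "neg_loop_vertex N0 R d (states s) N k"
    and acc: "\<And>xs. xs \<in> words s n \<Longrightarrow> foldl d N0 (g xs) \<inter> R \<noteq> {}"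
    and kn: "k \<le> n"
    and bij: "bij_betw g (words s n) (words s n)"
  shows False
proof -
  obtain w c where w: "set w \<subseteq> states s" "length w = k" "foldl d N0 w = N"
    and N: "N \<inter> R = {}" and c: "c \<in> states s" "d N c = N"
    using nl unfolding neg_loop_vertex_def rg_value_def by blast
  define y where "y = w @ replicate (n - k) c"
  have yw: "y \<in> words s n" using w c kn by (auto simp: y_def words_def)
  have yN: "foldl d N0 y = N" using w c by (simp add: y_def foldl_rep)
  obtain xs where "xs \<in> words s n" "g xs = y"
    using bij yw unfolding bij_betw_def by (metis imageE)
  then show False using acc yN N by metis
qed

theorem corollary1:
  fixes b :: boundary and s l r k :: nat and f :: "nat list \<Rightarrow> nat"
  assumes "s \<ge> 1"
    and "l + 1 + r \<ge> 2"
    and "\<forall>xs \<in> words s (l + 1 + r). f xs \<in> states s"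
    and "k \<ge> 1"
    and "case b of
           Null \<Rightarrow> (\<exists>N. neg_loop_vertex (rg_root_null s l r) (rg_acc_null s l r)
                             (rg_delta_null s l r f) (states s) N k)
         | Periodic \<Rightarrow> (\<exists>N. neg_loop_vertex (rg_root_per s l r) (rg_root_per s l r)
                             (rg_delta_per s l r f) (states s) N k)"
  shows "\<forall>n \<ge> k. \<not> n_cell_reversible b s l r f n"
proof (intro allI impI notI)
  fix n assume kn: "k \<le> n" and rev: "n_cell_reversible b s l r f n"
  have n: "n \<ge> 1" using kn assms(4) by simp
  have lr: "l + r \<ge> 1" using assms(2) by simp
  show False
  proof (cases b)
    case Null
    then obtain N where N: "neg_loop_vertex (rg_root_null s l r) (rg_acc_null s l r)
                             (rg_delta_null s l r f) (states s) N k" using assms(5) by auto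
    show False
      by (rule generic[OF N _ kn, of "gmap Null l r f"])
        (use null_acc[OF assms(1) _ n lr] rev Null in \<open>auto simp: n_cell_reversible_def\<close>)
  next
    case Periodic
    then obtain N where N: "neg_loop_vertex (rg_root_per s l r) (rg_root_per s l r)
                             (rg_delta_per s l r f) (states s) N k" using assms(5) by auto
    show False
      by (rule generic[OF N _ kn, of "gmap Periodic l r f"])
        (use per_acc[OF assms(1) _ n lr] rev Periodic in \<open>auto simp: n_cell_reversible_def\<close>)
  qed
qed

end
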